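(* Let $x\in\mathbb{R}^n$. Then: (a) $T_L\subseteq T_z$; (b) $P_{T_L^\perp}LP_{T_x}=0$, $P_{T_L}LP_{T_x^\perp}=0$, and $P_{T_L^\perp}L=LP_{T_x^\perp}$; (c) for all $x'\in\mathbb{R}^n$, $P_{T_z}LP_{T_x}x'=LP_{T_x}x'$, and $P_{T_z^\perp}LP_{T_x}=0$; (d) for all $u\in\mathbb{R}^p$, $P_{T_x}L^\top P_{T_L}u=P_{T_x}L^\top u$ and $P_{T_x}L^\top P_{T_z}u=P_{T_x}L^\top u$; (e) $L^\top P_{T_z}L$ is diagonal with $(L^\top P_{T_z}L)_{i,i}=\sum_{t\in\mathcal{I}_x,\ i\in G_t}w_t^2$ for $i=1,\dots,n$.
   Context: Let $n,N\in\mathbb{N}$, let $G_1,\dots,G_N\subseteq\{1,\dots,n\}$ be nonempty groups, possibly overlapping, with $\bigcup_iG_i=\{1,\dots,n\}$, and weights $w_i>0$. $x_G$ is the subvector of $x$ indexed by $G$ (increasing order). Let $p=\sum_i|G_i|$, partition $\{1,\dots,p\}$ into consecutive blocks $J_i=\{\sum_{j<i}|G_j|+1,\dots,\sum_{j\le i}|G_j|\}$, and define $L\in\mathbb{R}^{p\times n}$ by $(Lx)_{J_i}=w_ix_{G_i}$. For $x\in\mathbb{R}^n$: $\mathcal{I}_x=\{t:x_{G_t}\ne0\}$; $\mathcal{E}_x=\{1,\dots,n\}\setminus\bigcup_{t\notin\mathcal{I}_x}G_t$, $T_x=\{x'\in\mathbb{R}^n:\mathrm{supp}(x')\subseteq\mathcal{E}_x\}$;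 $\mathcal{E}_z=\bigcup_{t\in\mathcal{I}_x}J_t$, $T_z=\{z'\in\mathbb{R}^p:\mathrm{supp}(z')\subseteq\mathcal{E}_z\}$; $\mathcal{E}_L=\mathrm{supp}(LP_{T_x}\mathbf{1}_n)\subseteq\{1,\dots,p\}$ (with $\mathbf{1}_n$ the all-ones vector), $T_L=\{z'\in\mathbb{R}^p:\mathrm{supp}(z')\subseteq\mathcal{E}_L\}$. $P_T$ denotes the orthogonal (coordinate) projection onto the coordinate subspace $T$ and $T^\perp$ its orthogonal complement. *)

theory Defs
  imports "Jordan_Normal_Form.Matrix"
begin

text \<open>Conventions: 0-based indexing throughout. Coordinates are 0..<n, groups are
  indexed by 0..<N, rows of L are 0..<p. Vectors/matrices are JNF vec/mat.\<close>

definition blk_off :: "(nat \<Rightarrow> nat set) \<Rightarrow> nat \<Rightarrow> nat" where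
  "blk_off G t = (\<Sum>j<t. card (G j))"

definition dimp :: "nat \<Rightarrow> (nat \<Rightarrow> nat set) \<Rightarrow> nat" where
  "dimp N G = blk_off G N"

definition blkJ :: "(nat \<Rightarrow> nat set) \<Rightarrow> nat \<Rightarrow> nat set" where
  "blkJ G t = {blk_off G t ..< blk_off G t + card (G t)}"

(* the matrix L : (L x)_{J_t} = w_t x_{G_t}, with G_t listed in increasing order;
   row blk_off t + k corresponds to the k-th smallest element of G_t *)
definition Lmat :: "nat \<Rightarrow> nat \<Rightarrow> (nat \<Rightarrow> nat set) \<Rightarrow> (nat \<Rightarrow> real) \<Rightarrow> real mat" where
  "Lmat n N G w = mat (dimp N G) n (\<lambda>(r, c).
     \<Sum>t<N. if r \<in> blkJ G t \<and> c = sorted_list_of_set (G t) ! (r - blk_off G t)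
             then w t else 0)"

definition actI :: "nat \<Rightarrow> (nat \<Rightarrow> nat set) \<Rightarrow> real vec \<Rightarrow> nat set" where
  "actI N G x = {t. t < N \<and> (\<exists>i\<in>G t. x $ i \<noteq> 0)}"

definition Ex_set :: "nat \<Rightarrow> nat \<Rightarrow> (nat \<Rightarrow> nat set) \<Rightarrow> real vec \<Rightarrow> nat set" where
  "Ex_set n N G x = {..<n} - (\<Union>t\<in>{t. t < N \<and> t \<notin> actI N G x}. G t)"

definition Ez :: "nat \<Rightarrow> (nat \<Rightarrow> nat set) \<Rightarrow> real vec \<Rightarrow> nat set" where
  "Ez N G x = (\<Union>t\<in>actI N G x. blkJ G t)"

(* orthogonal coordinate projection onto T = {v \<in> R^d. supp v \<subseteq> E} *)
definition cproj :: "nat \<Rightarrow> nat set \<Rightarrow> real mat" where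
  "cproj d E = mat d d (\<lambda>(i, j). if i = j \<and> i \<in> E then 1 else 0)"

definition csub :: "nat \<Rightarrow> nat set \<Rightarrow> real vec set" where
  "csub d E = {v \<in> carrier_vec d. \<forall>i<d. i \<notin> E \<longrightarrow> v $ i = 0}"

definition ones_vec :: "nat \<Rightarrow> real vec" where
  "ones_vec d = vec d (\<lambda>_. 1)"

definition supp_vec :: "real vec \<Rightarrow> nat set" where
  "supp_vec v = {i. i < dim_vec v \<and> v $ i \<noteq> 0}"

definition EL :: "nat \<Rightarrow> nat \<Rightarrow> (nat \<Rightarrow> nat set) \<Rightarrow> (nat \<Rightarrow> real) \<Rightarrow> real vec \<Rightarrow> nat set" where
  "EL n N G w x = supp_vec ((Lmat n N G w * cproj n (Ex_set n N G x)) *\<^sub>v ones_vec n)"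

end

theory Submission
  imports Defs
begin



lemma blk_off_Suc: "blk_off G (Suc t) = blk_off G t + card (G t)"
  by (simp add: blk_off_def)

lemma blk_off_mono: "a \<le> b \<Longrightarrow> blk_off G a \<le> blk_off G b"
  unfolding blk_off_def by (rule sum_mono2) auto

lemma blk_unique_lt: "r \<in> blkJ G t1 \<Longrightarrow> r \<in> blkJ G t2 \<Longrightarrow> t1 < t2 \<Longrightarrow> False"
proof -
  assume a: "r \<in> blkJ G t1" "r \<in> blkJ G t2" "t1 < t2"
  have "blk_off G (Suc t1) \<le> blk_off G t2" using a(3) blk_off_mono Suc_leI by blast
  then show False using a(1,2) by (simp add: blkJ_def blk_off_Suc)
qed

lemma blk_unique: "r \<in> blkJ G t1 \<Longrightarrow> r \<in> blkJ G t2 \<Longrightarrow> t1 = t2"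
  by (metis blk_unique_lt linorder_neqE_nat)

lemma blk_exists: "r < blk_off G N \<Longrightarrow> \<exists>t<N. r \<in> blkJ G t"
proof (induction N)
  case 0 then show ?case by (simp add: blk_off_def)
next
  case (Suc N)
  show ?case
  proof (cases "r < blk_off G N")
    case True then show ?thesis using Suc.IH less_Suc_eq by blast
  next
    case False then have "r \<in> blkJ G N" using Suc.prems by (simp add: blkJ_def blk_off_Suc)
    then show ?thesis by blast
  qed
qed

definition tb :: "(nat \<Rightarrow> nat set) \<Rightarrow> nat \<Rightarrow> nat \<Rightarrow> nat" where
  "tb G N r = (THE t. t < N \<and> r \<in> blkJ G t)"

definition gf :: "(nat \<Rightarrow> nat set) \<Rightarrow> nat \<Rightarrow> nat \<Rightarrow> nat" where
  "gf G N r = sorted_list_of_set (G (tb G N r)) ! (r - blk_off G (tb G N r))"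

lemma tb_eq: "t < N \<Longrightarrow> r \<in> blkJ G t \<Longrightarrow> tb G N r = t"
  unfolding tb_def by (rule the_equality) (auto dest: blk_unique)

lemma tb_prop: "r < dimp N G \<Longrightarrow> tb G N r < N \<and> r \<in> blkJ G (tb G N r)"
  using blk_exists[of r G N] tb_eq unfolding dimp_def by metis

lemma gf_in: "r < dimp N G \<Longrightarrow> gf G N r \<in> G (tb G N r)"
proof -
  assume r: "r < dimp N G"
  define t where "t = tb G N r"
  have "r \<in> blkJ G t" using tb_prop[OF r] t_def by simp
  then have k: "r - blk_off G t < card (G t)" by (auto simp: blkJ_def)
  then have fin: "finite (G t)" using card.infinite by fastforce
  have "sorted_list_of_set (G t) ! (r - blk_off G t) \<in> set (sorted_list_of_set (G t))"
    using k fin by (intro nth_mem) simp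
  then show ?thesis using fin unfolding gf_def t_def[symmetric] by simp
qed

lemma Lmat_entry:
  assumes "r < dimp N G" "c < n"
  shows "Lmat n N G w $$ (r,c) = (if c = gf G N r then w (tb G N r) else 0)"
proof -
  have "Lmat n N G w $$ (r,c) = (\<Sum>t<N. if r \<in> blkJ G t \<and> c = sorted_list_of_set (G t) ! (r - blk_off G t)
             then w t else 0)" using assms by (simp add: Lmat_def)
  also have "\<dots> = (\<Sum>t<N. if t = tb G N r then (if c = gf G N r then w t else 0) else 0)"
  proof (rule sum.cong)
    fix t assume t: "t \<in> {..<N}"
    show "(if r \<in> blkJ G t \<and> c = sorted_list_of_set (G t) ! (r - blk_off G t) then w t else 0)
       = (if t = tb G N r then (if c = gf G N r then w t else 0) else 0)"
    proof (cases "t = tb G N r")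
      case True
      then have "r \<in> blkJ G t" using tb_prop[OF assms(1)] by simp
      moreover have "sorted_list_of_set (G t) ! (r - blk_off G t) = gf G N r"
        unfolding gf_def True ..
      ultimately show ?thesis using True by simp
    next
      case False
      then have "r \<notin> blkJ G t" using tb_eq t by blast
      then show ?thesis using False by simp
    qed
  qed simp
  also have "\<dots> = (if c = gf G N r then w (tb G N r) else 0)"
    using tb_prop[OF assms(1)] by (simp add: sum.delta)
  finally show ?thesis .
qed

lemma cproj_carrier[simp]: "cproj d E \<in> carrier_mat d d"
  by (simp add: cproj_def)

lemma cproj_dims[simp]: "dim_row (cproj d E) = d" "dim_col (cproj d E) = d"
  by (simp_all add: cproj_def)

lemma cproj_left:
  assumes "dim_row A = d" "i < d" "j < dim_col A"
  shows "(cproj d E * A) $$ (i,j) = (if i \<in> E then A $$ (i,j) else 0)"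
proof -
  have "(cproj d E * A) $$ (i,j) = (\<Sum>k\<in>{0..<d}. (if i = k \<and> i \<in> E then 1 else 0) * A $$ (k,j))"
    using assms by (simp add: scalar_prod_def cproj_def)
  also have "\<dots> = (\<Sum>k\<in>{0..<d}. if k = i then (if i \<in> E then A $$ (i,j) else 0) else 0)"
    by (rule sum.cong) auto
  also have "\<dots> = (if i \<in> E then A $$ (i,j) else 0)" using assms by (simp add: sum.delta)
  finally show ?thesis .
qed

lemma cproj_right:
  assumes "dim_col A = d" "i < dim_row A" "j < d"
  shows "(A * cproj d E) $$ (i,j) = (if j \<in> E then A $$ (i,j) else 0)"
proof -
  have "(A * cproj d E) $$ (i,j) = (\<Sum>k\<in>{0..<d}. A $$ (i,k) * (if k = j \<and> k \<in> E then 1 else 0))"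
    using assms by (simp add: scalar_prod_def cproj_def)
  also have "\<dots> = (\<Sum>k\<in>{0..<d}. if k = j then (if j \<in> E then A $$ (i,j) else 0) else 0)"
    by (rule sum.cong) auto
  also have "\<dots> = (if j \<in> E then A $$ (i,j) else 0)" using assms by (simp add: sum.delta)
  finally show ?thesis .
qed


theorem lemmaA2:
  fixes n N :: nat and G :: "nat \<Rightarrow> nat set" and w :: "nat \<Rightarrow> real" and x :: "real vec"
  assumes G_ne: "\<And>t. t < N \<Longrightarrow> G t \<noteq> {}"
    and G_sub: "\<And>t. t < N \<Longrightarrow> G t \<subseteq> {..<n}"
    and G_cover: "(\<Union>t<N. G t) = {..<n}"
    and w_pos: "\<And>t. t < N \<Longrightarrow> w t > 0"
    and x_dim: "x \<in> carrier_vec n"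
  defines "p \<equiv> dimp N G"
    and "L \<equiv> Lmat n N G w"
    and "I \<equiv> actI N G x"
    and "Px \<equiv> cproj n (Ex_set n N G x)"
    and "Pxc \<equiv> cproj n ({..<n} - Ex_set n N G x)"
    and "Pz \<equiv> cproj (dimp N G) (Ez N G x)"
    and "Pzc \<equiv> cproj (dimp N G) ({..<dimp N G} - Ez N G x)"
    and "PL \<equiv> cproj (dimp N G) (EL n N G w x)"
    and "PLc \<equiv> cproj (dimp N G) ({..<dimp N G} - EL n N G w x)"
  shows "csub p (EL n N G w x) \<subseteq> csub p (Ez N G x)
    \<and> (PLc * L * Px = 0\<^sub>m p n \<and> PL * L * Pxc = 0\<^sub>m p n \<and> PLc * L = L * Pxc)
    \<and> ((\<forall>x' \<in> carrier_vec n. (Pz * L * Px) *\<^sub>v x' = (L * Px) *\<^sub>v x')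
         \<and> Pzc * L * Px = 0\<^sub>m p n)
    \<and> (\<forall>u \<in> carrier_vec p. (Px * transpose_mat L * PL) *\<^sub>v u = (Px * transpose_mat L) *\<^sub>v u
         \<and> (Px * transpose_mat L * Pz) *\<^sub>v u = (Px * transpose_mat L) *\<^sub>v u)
    \<and> (diagonal_mat (transpose_mat L * Pz * L)
         \<and> (\<forall>i<n. (transpose_mat L * Pz * L) $$ (i, i) = (\<Sum>t\<in>{t\<in>I. i \<in> G t}. (w t)\<^sup>2)))"
  proof -
  define b where "b = tb G N"
  define g where "g = gf G N"
  define Ex where "Ex = Ex_set n N G x"
  define E where "E = Ez N G x"
  have pd: "dimp N G = p" by (simp add: p_def)
  have Lc: "L \<in> carrier_mat p n" by (simp add: L_def p_def Lmat_def)
  have KL: "\<And>r c. r<p \<Longrightarrow> c<n \<Longrightarrow> L $$ (r,c) = (if c = g r then w (b r) else 0)"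
    using Lmat_entry by (simp add: L_def p_def g_def b_def)
  have Kb: "\<And>r. r<p \<Longrightarrow> b r < N \<and> r \<in> blkJ G (b r) \<and> g r \<in> G (b r)"
    using tb_prop gf_in by (simp add: p_def b_def g_def)
  have Kg: "\<And>r. r<p \<Longrightarrow> g r < n" using Kb G_sub by blast
  have KEz: "\<And>r. r<p \<Longrightarrow> g r \<in> Ex \<Longrightarrow> r \<in> E"
  proof -
    fix r assume r: "r<p" "g r \<in> Ex"
    have "b r \<in> actI N G x"
    proof (rule ccontr)
      assume "b r \<notin> actI N G x"
      then have "g r \<notin> Ex" using Kb[OF r(1)] unfolding Ex_def Ex_set_def by blast
      then show False using r(2) by simp
    qed
    then show "r \<in> E" using Kb[OF r(1)] unfolding E_def Ez_def by blast
  qed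
  have Pxc: "Px \<in> carrier_mat n n" by (simp add: Px_def)
  have Ent: "\<And>r. r<p \<Longrightarrow> ((L * Px) *\<^sub>v ones_vec n) $ r = (if g r \<in> Ex then w (b r) else 0)"
  proof -
    fix r assume r: "r<p"
    have "((L * Px) *\<^sub>v ones_vec n) $ r = row (L * Px) r \<bullet> ones_vec n"
      using r Lc by (intro index_mult_mat_vec) simp
    also have "\<dots> = (\<Sum>c\<in>{0..<n}. row (L * Px) r $ c * ones_vec n $ c)"
      unfolding scalar_prod_def by (simp add: ones_vec_def)
    also have "\<dots> = (\<Sum>c\<in>{0..<n}. (L*Px) $$ (r,c))"
      apply (rule sum.cong, simp) using r Lc Pxc by (simp add: ones_vec_def)
    also have "\<dots> = (\<Sum>c\<in>{0..<n}. if c = g r then (if g r \<in> Ex then w (b r) else 0) else 0)"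
      apply (rule sum.cong, simp) using r Lc by (auto simp del: index_mult_mat(1) simp: Px_def cproj_right KL Ex_def)
    also have "\<dots> = (if g r \<in> Ex then w (b r) else 0)" using Kg r by simp
    finally show "((L * Px) *\<^sub>v ones_vec n) $ r = (if g r \<in> Ex then w (b r) else 0)" .
  qed
  have KEL: "EL n N G w x = {r. r<p \<and> g r \<in> Ex}"
  proof -
    have "EL n N G w x = supp_vec ((L * Px) *\<^sub>v ones_vec n)"
      unfolding EL_def L_def Px_def ..
    also have "\<dots> = {r. r<p \<and> g r \<in> Ex}"
      unfolding supp_vec_def
    proof (rule Collect_cong)
      fix r
      have "dim_vec ((L * Px) *\<^sub>v ones_vec n) = p" using Lc by simp
      moreover have "r < p \<Longrightarrow> ((L * Px) *\<^sub>v ones_vec n) $ r \<noteq> 0 \<longleftrightarrow> g r \<in> Ex"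
        using Ent Kb w_pos by (metis less_irrefl)
      ultimately show "(r < dim_vec ((L * Px) *\<^sub>v ones_vec n) \<and> ((L * Px) *\<^sub>v ones_vec n) $ r \<noteq> 0) = (r < p \<and> g r \<in> Ex)"
        by blast
    qed
    finally show ?thesis .
  qed
  have PLd: "PL = cproj p {r. r<p \<and> g r \<in> Ex}" using PL_def KEL pd by simp
  have PLcd: "PLc = cproj p ({..<p} - {r. r<p \<and> g r \<in> Ex})" using PLc_def KEL pd by simp
  have Pzd: "Pz = cproj p E" using Pz_def pd E_def by simp
  have Pzcd: "Pzc = cproj p ({..<p} - E)" using Pzc_def pd E_def by simp
  have Pxd: "Px = cproj n Ex" using Px_def Ex_def by simp
  have Pxcd: "Pxc = cproj n ({..<n} - Ex)" using Pxc_def Ex_def by simp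
  note Ps = PLd PLcd Pzd Pzcd Pxd Pxcd
  have Ld: "dim_row L = p" "dim_col L = n" using Lc by auto
  have A: "csub p (EL n N G w x) \<subseteq> csub p (Ez N G x)"
    unfolding csub_def KEL E_def[symmetric] using KEz by auto
  have B1: "PLc * L * Px = 0\<^sub>m p n"
    by (rule eq_matI) (auto simp del: index_mult_mat(1) simp: Ps cproj_left cproj_right Ld KL)
  have B2: "PL * L * Pxc = 0\<^sub>m p n"
    by (rule eq_matI) (auto simp del: index_mult_mat(1) simp: Ps cproj_left cproj_right Ld KL)
  have B3: "PLc * L = L * Pxc"
    by (rule eq_matI) (auto simp del: index_mult_mat(1) simp: Ps cproj_left cproj_right Ld KL)
  have C1: "Pz * L * Px = L * Px"
    by (rule eq_matI) (auto simp del: index_mult_mat(1) simp: Ps cproj_left cproj_right Ld KL KEz)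
  have C2: "Pzc * L * Px = 0\<^sub>m p n"
    by (rule eq_matI) (auto simp del: index_mult_mat(1) simp: Ps cproj_left cproj_right Ld KL KEz)
  have D1: "Px * transpose_mat L * PL = Px * transpose_mat L"
    by (rule eq_matI) (auto simp del: index_mult_mat(1) simp: Ps cproj_left cproj_right Ld KL)
  have D2: "Px * transpose_mat L * Pz = Px * transpose_mat L"
    by (rule eq_matI) (auto simp del: index_mult_mat(1) simp: Ps cproj_left cproj_right Ld KL KEz)
  have Eent: "\<And>i j. i<n \<Longrightarrow> j<n \<Longrightarrow> (transpose_mat L * Pz * L) $$ (i,j)
     = (\<Sum>r\<in>{0..<p}. if r \<in> E \<and> i = g r \<and> j = g r then (w (b r))\<^sup>2 else 0)"
  proof -
    fix i j assume ij: "i<n" "j<n"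
    have "(transpose_mat L * Pz * L) $$ (i,j) = (\<Sum>r\<in>{0..<p}. (transpose_mat L * Pz) $$ (i,r) * L $$ (r,j))"
    proof -
      have "(transpose_mat L * Pz * L) $$ (i,j) = row (transpose_mat L * Pz) i \<bullet> col L j"
        by (rule index_mult_mat(1)) (simp_all add: Ld Pzd ij)
      also have "\<dots> = (\<Sum>r\<in>{0..<p}. (transpose_mat L * Pz) $$ (i,r) * L $$ (r,j))"
        unfolding scalar_prod_def using ij by (intro sum.cong) (simp_all del: index_mult_mat(1) add: Ld Pzd)
      finally show ?thesis .
    qed
    also have "\<dots> = (\<Sum>r\<in>{0..<p}. if r \<in> E \<and> i = g r \<and> j = g r then (w (b r))\<^sup>2 else 0)"
      apply (rule sum.cong, simp) using ij by (auto simp del: index_mult_mat(1) simp: Pzd cproj_right Ld KL power2_eq_square)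
    finally show "(transpose_mat L * Pz * L) $$ (i,j)
     = (\<Sum>r\<in>{0..<p}. if r \<in> E \<and> i = g r \<and> j = g r then (w (b r))\<^sup>2 else 0)" .
  qed
  have E1: "diagonal_mat (transpose_mat L * Pz * L)"
    unfolding diagonal_mat_def
  proof (intro allI impI)
    fix i j assume a: "i < dim_row (transpose_mat L * Pz * L)" "j < dim_col (transpose_mat L * Pz * L)" "i \<noteq> j"
    then have ij: "i < n" "j < n" by (simp_all add: Ld)
    have "(\<Sum>r\<in>{0..<p}. if r \<in> E \<and> i = g r \<and> j = g r then (w (b r))\<^sup>2 else 0) = 0"
      by (rule sum.neutral) (use a(3) in auto)
    then show "(transpose_mat L * Pz * L) $$ (i,j) = 0" using Eent[OF ij] by simp
  qed
  have E2: "(transpose_mat L * Pz * L) $$ (i, i) = (\<Sum>t\<in>{t\<in>I. i \<in> G t}. (w t)\<^sup>2)" if i: "i<n" for i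
  proof -
    define S where "S = {r\<in>{0..<p}. r \<in> E \<and> g r = i}"
    have "(transpose_mat L * Pz * L) $$ (i,i) = (\<Sum>r\<in>S. (w (b r))\<^sup>2)"
      unfolding Eent[OF i i] S_def by (subst sum.inter_filter[symmetric]) (auto intro: sum.cong)
    also have "\<dots> = (\<Sum>t\<in>{t\<in>I. i \<in> G t}. (w t)\<^sup>2)"
    proof (rule sum.reindex_bij_betw)
      show "bij_betw b S {t\<in>I. i \<in> G t}"
      proof (rule bij_betw_imageI)
        show "inj_on b S"
        proof (rule inj_onI)
          fix r1 r2 assume r: "r1 \<in> S" "r2 \<in> S" "b r1 = b r2"
          define t where "t = b r1"
          have r1: "r1 < p" "g r1 = i" using r(1) S_def by auto
          have r2: "r2 < p" "g r2 = i" using r(2) S_def by auto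
          have bb: "b r2 = t" using r(3) t_def by simp
          have r1b: "r1 \<in> blkJ G t" using Kb[OF r1(1)] t_def by simp
          have r2b: "r2 \<in> blkJ G t" using Kb[OF r2(1)] bb by simp
          have "t < N" using Kb[OF r1(1)] t_def by simp
          then have fin: "finite (G t)" using G_sub finite_subset[OF _ finite_lessThan] by metis
          have g1: "g r1 = sorted_list_of_set (G t) ! (r1 - blk_off G t)"
            unfolding g_def gf_def t_def b_def by simp
          have g2: "g r2 = sorted_list_of_set (G t) ! (r2 - blk_off G t)"
            using bb unfolding g_def gf_def b_def by simp
          have eq: "sorted_list_of_set (G t) ! (r1 - blk_off G t) = sorted_list_of_set (G t) ! (r2 - blk_off G t)"
            using r1(2) r2(2) g1 g2 by simp
          have "r1 - blk_off G t = r2 - blk_off G t"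
            using nth_eq_iff_index_eq[of "sorted_list_of_set (G t)" "r1 - blk_off G t" "r2 - blk_off G t"]
              eq r1b r2b fin by (auto simp: blkJ_def)
          then show "r1 = r2" using r1b r2b by (auto simp: blkJ_def)
        qed
      next
        show "b ` S = {t\<in>I. i \<in> G t}"
        proof
          show "b ` S \<subseteq> {t\<in>I. i \<in> G t}"
          proof
            fix t assume "t \<in> b ` S"
            then obtain r where r: "r \<in> S" "t = b r" by blast
            then have rr: "r < p" "r \<in> E" "g r = i" using S_def by auto
            then obtain t' where t': "t' \<in> actI N G x" "r \<in> blkJ G t'" unfolding E_def Ez_def by blast
            then have "t' < N" by (simp add: actI_def)
            then have "b r = t'" using t' tb_eq b_def by simp
            then show "t \<in> {t\<in>I. i \<in> G t}" using t' r rr Kb I_def by auto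
          qed
        next
          show "{t\<in>I. i \<in> G t} \<subseteq> b ` S"
          proof
            fix t assume t: "t \<in> {t\<in>I. i \<in> G t}"
            then have tN: "t < N" and tI: "t \<in> actI N G x" and iG: "i \<in> G t" by (auto simp: I_def actI_def)
            have fin: "finite (G t)" using G_sub[OF tN] finite_subset by blast
            define xs where "xs = sorted_list_of_set (G t)"
            have ixs: "i \<in> set xs" using fin iG xs_def by simp
            obtain k where k0: "k < length xs" "xs ! k = i" using ixs in_set_conv_nth by metis
            have k: "k < card (G t)" "xs ! k = i" using k0 fin xs_def by auto
            define r where "r = blk_off G t + k"
            have rJ: "r \<in> blkJ G t" using k r_def by (simp add: blkJ_def)
            have "blk_off G (Suc t) \<le> blk_off G N" using tN blk_off_mono by simp
            then have rp: "r < p" using k r_def by (simp add: p_def dimp_def blk_off_Suc)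
            have br: "b r = t" using tb_eq tN rJ b_def by simp
            have gr: "g r = i" using br k r_def xs_def unfolding g_def gf_def b_def by simp
            have "r \<in> E" using tI rJ unfolding E_def Ez_def by blast
            then have "r \<in> S" using rp gr S_def by simp
            then show "t \<in> b ` S" using br by force
          qed
        qed
      qed
    qed
    finally show ?thesis .
  qed
  have C1': "\<forall>x' \<in> carrier_vec n. (Pz * L * Px) *\<^sub>v x' = (L * Px) *\<^sub>v x'"
    by (simp only: C1) blast
  have D': "\<forall>u \<in> carrier_vec p. (Px * transpose_mat L * PL) *\<^sub>v u = (Px * transpose_mat L) *\<^sub>v u
         \<and> (Px * transpose_mat L * Pz) *\<^sub>v u = (Px * transpose_mat L) *\<^sub>v u"
    by (simp only: D1 D2) blast
  have E2': "\<forall>i<n. (transpose_mat L * Pz * L) $$ (i, i) = (\<Sum>t\<in>{t\<in>I. i \<in> G t}. (w t)\<^sup>2)"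
    using E2 by blast
  show ?thesis using A B1 B2 B3 C1' C2 D' E1 E2' by blast
qed

end
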